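(* For each of the ranking measures NDCG, MAP and AUC, with binary relevance vectors and top-1 feedback, there is a number of objects $m$ for which the global observability condition fails for the corresponding game: there exist learner actions $\sigma_i,\sigma_j$ with $\ell_i-\ell_j\notin\bigoplus_{k\in[m!]}\mathrm{Col}(S_k^\top)$.
   Context: Objects are $\{1,\dots,m\}$; learner actions are the permutations $\sigma_1,\dots,\sigma_{m!}$ of $[m]$ ($\sigma(i)$ = rank of object $i$, $\sigma^{-1}(j)$ = object at rank $j$); adversary actions are $r_1,\dots,r_{2^m}$ enumerating $\{0,1\}^m$. Measures: $NDCG(\sigma,r)=\frac{1}{Z(r)}\sum_{i=1}^m\frac{r(i)}{\log_2(1+\sigma(i))}$ with $Z(r)=\max_\sigma\sum_{i}\frac{r(i)}{\log_2(1+\sigma(i))}$; $MAP(\sigma,r)=\frac{1}{\|r\|_1}\sum_{i=1}^m\frac{\sum_{j\le i}\mathbb{1}(r(\sigma^{-1}(j))=1)}{i}\mathbb{1}(r(\sigma^{-1}(i))=1)$; $AUC(\sigma,r)=\frac{1}{N(r)}\sum_{i,j}\mathbb{1}(\sigma(i)<\sigma(j))\mathbb{1}(r(i)<r(j))$ with $N(r)=\|r\|_1(m-\|r\|_1)$ (for $r$ with $Z(r)$, $\|r\|_1$ or $N(r)$ zero the measure is taken to be a constant, e.g. $1$ for the gains NDCG, MAP and $0$ for the loss AUC). For a given measure $RL$, the loss (or gain) matrix has entries $L_{i,j}=RL(\sigma_i,r_j)$ with rows $\ell_i$; the feedback matrix has $H_{i,j}=r_j(\sigma_i^{-1}(1))$;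 the signal matrix $S_i\in\{0,1\}^{2\times2^m}$ has $(S_i)_{1,\ell}=\mathbb{1}(H_{i,\ell}=0)$, $(S_i)_{2,\ell}=\mathbb{1}(H_{i,\ell}=1)$. Global observability holds if $\ell_i-\ell_j\in\bigoplus_{k\in[m!]}\mathrm{Col}(S_k^\top)$ for all pairs $i,j$. *)

theory Defs
  imports Complex_Main "HOL-Combinatorics.Permutations"
begin

text \<open>A learner action is a permutation sigma of {1..m}
  (sigma i = rank of object i; inv sigma j = object at rank j).
  Adversary actions: binary relevance vectors r, represented as nat => nat
  with values in {0,1} on {1..m} and 0 outside (so there are exactly 2^m of them).\<close>

definition perms :: "nat \<Rightarrow> (nat \<Rightarrow> nat) set" where
  "perms m = {\<sigma>. \<sigma> permutes {1..m}}"

definition relvecs :: "nat \<Rightarrow> (nat \<Rightarrow> nat) set" where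
  "relvecs m = {r. (\<forall>i\<in>{1..m}. r i \<in> {0,1}) \<and> (\<forall>i. i \<notin> {1..m} \<longrightarrow> r i = 0)}"

definition norm1 :: "nat \<Rightarrow> (nat \<Rightarrow> nat) \<Rightarrow> nat" where
  "norm1 m r = (\<Sum>i=1..m. r i)"

definition DCG :: "nat \<Rightarrow> (nat \<Rightarrow> nat) \<Rightarrow> (nat \<Rightarrow> nat) \<Rightarrow> real" where
  "DCG m \<sigma> r = (\<Sum>i=1..m. real (r i) / log 2 (1 + real (\<sigma> i)))"

definition Zmax :: "nat \<Rightarrow> (nat \<Rightarrow> nat) \<Rightarrow> real" where
  "Zmax m r = Max ((\<lambda>\<tau>. DCG m \<tau> r) ` perms m)"

definition NDCG :: "nat \<Rightarrow> (nat \<Rightarrow> nat) \<Rightarrow> (nat \<Rightarrow> nat) \<Rightarrow> real" where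
  "NDCG m \<sigma> r = (if Zmax m r = 0 then 1 else DCG m \<sigma> r / Zmax m r)"

definition MAP :: "nat \<Rightarrow> (nat \<Rightarrow> nat) \<Rightarrow> (nat \<Rightarrow> nat) \<Rightarrow> real" where
  "MAP m \<sigma> r = (if norm1 m r = 0 then 1 else
     (1 / real (norm1 m r)) *
     (\<Sum>i=1..m. (real (card {j\<in>{1..i}. r (inv \<sigma> j) = 1}) / real i) *
                 (if r (inv \<sigma> i) = 1 then 1 else 0)))"

definition AUC :: "nat \<Rightarrow> (nat \<Rightarrow> nat) \<Rightarrow> (nat \<Rightarrow> nat) \<Rightarrow> real" where
  "AUC m \<sigma> r = (let N = norm1 m r * (m - norm1 m r) in
     if N = 0 then 0 else
     (1 / real N) * (\<Sum>i=1..m. \<Sum>j=1..m.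
        (if \<sigma> i < \<sigma> j then 1 else 0) * (if r i < r j then 1 else 0)))"

text \<open>Top-1 feedback H(sigma, r) = r(sigma^{-1}(1)); the signal matrix S_sigma has
  rows indexed by b in {0,1}: (S_sigma)_{b,r} = 1(H(sigma,r) = b).\<close>

definition feedback :: "(nat \<Rightarrow> nat) \<Rightarrow> (nat \<Rightarrow> nat) \<Rightarrow> nat" where
  "feedback \<sigma> r = r (inv \<sigma> 1)"

definition signal :: "(nat \<Rightarrow> nat) \<Rightarrow> nat \<Rightarrow> (nat \<Rightarrow> nat) \<Rightarrow> real" where
  "signal \<sigma> b r = (if feedback \<sigma> r = b then 1 else 0)"

text \<open>Global observability: for all learner actions sigma, tau, the difference of loss rows
  (vectors indexed by the relevance vectors) lies in the sum over all k of Col(S_k^T),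
  i.e. equals sum_k S_k^T v_k for some v_k in R^2.\<close>

definition globally_observable ::
  "nat \<Rightarrow> (nat \<Rightarrow> (nat \<Rightarrow> nat) \<Rightarrow> (nat \<Rightarrow> nat) \<Rightarrow> real) \<Rightarrow> bool" where
  "globally_observable m RL \<longleftrightarrow>
     (\<forall>\<sigma>\<in>perms m. \<forall>\<tau>\<in>perms m. \<exists>v :: (nat \<Rightarrow> nat) \<Rightarrow> nat \<Rightarrow> real.
        \<forall>r\<in>relvecs m. RL m \<sigma> r - RL m \<tau> r =
          (\<Sum>\<rho>\<in>perms m. \<Sum>b\<in>{0,1}. v \<rho> b * signal \<rho> b r))"

end

theory Submission
  imports Defs
begin

lemma sig_quad:
  assumes q: "\<forall>j. (r1 j = r3 j \<and> r2 j = r4 j) \<or> (r1 j = r4 j \<and> r2 j = r3 j)"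
  shows "(\<Sum>\<rho>\<in>A. \<Sum>b\<in>{0,1}. v \<rho> b * signal \<rho> b r1) + (\<Sum>\<rho>\<in>A. \<Sum>b\<in>{0,1}. v \<rho> b * signal \<rho> b r2)
       = (\<Sum>\<rho>\<in>A. \<Sum>b\<in>{0,1}. v \<rho> b * signal \<rho> b r3) + (\<Sum>\<rho>\<in>A. \<Sum>b\<in>{0,1}. v \<rho> b * signal \<rho> b r4)"
proof -
  have "\<And>\<rho>. (\<Sum>b\<in>{0,1}. v \<rho> b * signal \<rho> b r1) + (\<Sum>b\<in>{0,1}. v \<rho> b * signal \<rho> b r2)
       = (\<Sum>b\<in>{0,1}. v \<rho> b * signal \<rho> b r3) + (\<Sum>b\<in>{0,1}. v \<rho> b * signal \<rho> b r4)"
  proof -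
    fix \<rho> :: "nat \<Rightarrow> nat"
    from q have "(r1 (inv \<rho> 1) = r3 (inv \<rho> 1) \<and> r2 (inv \<rho> 1) = r4 (inv \<rho> 1)) \<or> (r1 (inv \<rho> 1) = r4 (inv \<rho> 1) \<and> r2 (inv \<rho> 1) = r3 (inv \<rho> 1))" by blast
    then show "(\<Sum>b\<in>{0,1}. v \<rho> b * signal \<rho> b r1) + (\<Sum>b\<in>{0,1}. v \<rho> b * signal \<rho> b r2)
       = (\<Sum>b\<in>{0,1}. v \<rho> b * signal \<rho> b r3) + (\<Sum>b\<in>{0,1}. v \<rho> b * signal \<rho> b r4)" unfolding signal_def feedback_def by auto
  qed
  then show ?thesis by (simp add: sum.distrib[symmetric])
qed

lemma notobs:
  assumes s: "\<sigma> \<in> perms m" and t: "\<tau> \<in> perms m"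
    and r: "r1 \<in> relvecs m" "r2 \<in> relvecs m" "r3 \<in> relvecs m" "r4 \<in> relvecs m"
    and q: "\<forall>j. (r1 j = r3 j \<and> r2 j = r4 j) \<or> (r1 j = r4 j \<and> r2 j = r3 j)"
    and ne: "(RL m \<sigma> r1 - RL m \<tau> r1) + (RL m \<sigma> r2 - RL m \<tau> r2) \<noteq> (RL m \<sigma> r3 - RL m \<tau> r3) + (RL m \<sigma> r4 - RL m \<tau> r4)"
  shows "\<not> globally_observable m RL"
proof
  assume "globally_observable m RL"
  then obtain v where v: "\<forall>r\<in>relvecs m. RL m \<sigma> r - RL m \<tau> r =
          (\<Sum>\<rho>\<in>perms m. \<Sum>b\<in>{0,1}. v \<rho> b * signal \<rho> b r)"
    using s t unfolding globally_observable_def by blast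
  show False using ne sig_quad[OF q, where A="perms m" and v=v] v r by simp
qed

definition e3 :: "nat \<Rightarrow> nat" where "e3 = (\<lambda>i. if i = 3 then 1 else 0)"
definition e4 :: "nat \<Rightarrow> nat" where "e4 = (\<lambda>i. if i = 4 then 1 else 0)"
definition e34 :: "nat \<Rightarrow> nat" where "e34 = (\<lambda>i. if i = 3 \<or> i = 4 then 1 else 0)"
definition z0 :: "nat \<Rightarrow> nat" where "z0 = (\<lambda>i. 0)"
abbreviation tau :: "nat \<Rightarrow> nat" where "tau \<equiv> Transposition.transpose 2 3"

lemma quad: "\<forall>j. (z0 j = e4 j \<and> e34 j = e3 j) \<or> (z0 j = e3 j \<and> e34 j = e4 j)"
  by (auto simp: z0_def e3_def e4_def e34_def)

lemma rels: "z0 \<in> relvecs 4" "e3 \<in> relvecs 4" "e4 \<in> relvecs 4" "e34 \<in> relvecs 4"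
  by (auto simp: relvecs_def z0_def e3_def e4_def e34_def)

lemma prms: "id \<in> perms 4" "tau \<in> perms 4"
  by (auto simp: perms_def intro!: permutes_swap_id)

lemma int4: "{1..4::nat} = {1,2,3,4}" by auto

lemma ints: "{1..1::nat} = {1}" "{1..2::nat} = {1,2}" "{1..3::nat} = {1,2,3}" "{1..4::nat} = {1,2,3,4}" by auto

lemma invs: "inv tau = tau" "inv (id::nat\<Rightarrow>nat) = id" by (simp_all add: inv_id)

lemma sum4: "sum f {1..4::nat} = f 1 + f 2 + f 3 + f 4"
  unfolding ints by (simp add: add.assoc)

lemma filt: "{j \<in> insert a A. P j} = (if P a then insert a {j\<in>A. P j} else {j\<in>A. P j})"
  "{j \<in> {}. P j} = {}" by auto

lemma m1: "MAP 4 id e3 = 1/3" unfolding MAP_def norm1_def sum4 unfolding ints invs unfolding filt by (simp add: e3_def)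
lemma m2: "MAP 4 tau e3 = 1/2" unfolding MAP_def norm1_def sum4 unfolding ints invs unfolding filt by (simp add: e3_def)
lemma m3: "MAP 4 id e34 = 5/12" unfolding MAP_def norm1_def sum4 unfolding ints invs unfolding filt by (simp add: e34_def)
lemma m4: "MAP 4 tau e34 = 1/2" unfolding MAP_def norm1_def sum4 unfolding ints invs unfolding filt by (simp add: e34_def)
lemma m5: "MAP 4 id e4 = MAP 4 tau e4" unfolding MAP_def norm1_def sum4 unfolding ints invs unfolding filt by (simp add: e4_def)
lemma m6: "MAP 4 id z0 = MAP 4 tau z0" unfolding MAP_def norm1_def sum4 unfolding ints invs unfolding filt by (simp add: z0_def)

lemma map_ne: "(MAP 4 id z0 - MAP 4 tau z0) + (MAP 4 id e34 - MAP 4 tau e34) \<noteq> (MAP 4 id e4 - MAP 4 tau e4) + (MAP 4 id e3 - MAP 4 tau e3)"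
  by (simp add: m1 m2 m3 m4 m5 m6)

lemma a1: "AUC 4 id e3 = 2/3" unfolding AUC_def Let_def norm1_def sum4 by (simp add: e3_def)
lemma a2: "AUC 4 tau e3 = 1/3" unfolding AUC_def Let_def norm1_def sum4 by (simp add: e3_def)
lemma a3: "AUC 4 id e34 = 1" unfolding AUC_def Let_def norm1_def sum4 by (simp add: e34_def)
lemma a4: "AUC 4 tau e34 = 3/4" unfolding AUC_def Let_def norm1_def sum4 by (simp add: e34_def)
lemma a5: "AUC 4 id e4 = AUC 4 tau e4" unfolding AUC_def Let_def norm1_def sum4 by (simp add: e4_def)
lemma a6: "AUC 4 id z0 = AUC 4 tau z0" unfolding AUC_def Let_def norm1_def sum4 by (simp add: z0_def)

lemma auc_ne: "(AUC 4 id z0 - AUC 4 tau z0) + (AUC 4 id e34 - AUC 4 tau e34) \<noteq> (AUC 4 id e4 - AUC 4 tau e4) + (AUC 4 id e3 - AUC 4 tau e3)"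
  by (simp add: a1 a2 a3 a4 a5 a6)

lemma l4: "log 2 (4::real) = 2" using log_pow_cancel[of "2::real" 2] by simp
lemma l3: "log 2 (3::real) < 2" "log 2 (3::real) > 1" using log_less_cancel_iff[of 2 3 4] l4 by simp_all
lemma l5: "log 2 (5::real) > 0" by simp

lemma d1: "DCG 4 id e3 = 1/2" unfolding DCG_def sum4 by (simp add: e3_def l4)
lemma d2: "DCG 4 tau e3 = 1/log 2 3" unfolding DCG_def sum4 by (simp add: e3_def l4)
lemma d3: "DCG 4 id e34 = 1/2 + 1/log 2 5" unfolding DCG_def sum4 by (simp add: e34_def l4)
lemma d4: "DCG 4 tau e34 = 1/log 2 3 + 1/log 2 5" unfolding DCG_def sum4 by (simp add: e34_def)
lemma d5: "DCG 4 id e4 = DCG 4 tau e4" unfolding DCG_def sum4 by (simp add: e4_def)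
lemma d6: "DCG 4 id z0 = DCG 4 tau z0" unfolding DCG_def sum4 by (simp add: z0_def)

lemma finp: "finite (perms 4)" unfolding perms_def by (rule finite_permutations) simp

lemma z3_le: "Zmax 4 e3 \<le> 1"
  unfolding Zmax_def
proof (rule Max.boundedI)
  show "finite ((\<lambda>\<tau>. DCG 4 \<tau> e3) ` perms 4)" using finp by simp
  show "(\<lambda>\<tau>. DCG 4 \<tau> e3) ` perms 4 \<noteq> {}" using prms by auto
  fix a assume "a \<in> (\<lambda>\<tau>. DCG 4 \<tau> e3) ` perms 4"
  then obtain \<rho> where r: "\<rho> permutes {1..4}" and a: "a = DCG 4 \<rho> e3" by (auto simp: perms_def)
  have "\<rho> 3 \<in> {1..4}" using permutes_in_image[OF r, of 3] by simp
  then have g: "1 \<le> real (\<rho> 3)" by simp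
  have a': "a = 1 / log 2 (1 + real (\<rho> 3))" unfolding a DCG_def sum4 by (simp add: e3_def l4)
  have "1 \<le> log 2 (1 + real (\<rho> 3))" using g by simp
  then show "a \<le> 1" unfolding a' by simp
qed

lemma z3_ge: "Zmax 4 e3 \<ge> 1/2"
  unfolding Zmax_def using finp prms d1 by (metis (no_types, lifting) Max_ge finite_imageI image_eqI)

lemma rho0: "Transposition.transpose 1 3 \<circ> Transposition.transpose 2 4 \<in> perms (4::nat)"
  unfolding perms_def by (auto intro!: permutes_compose permutes_swap_id)

lemma z34_ge: "Zmax 4 e34 \<ge> 1 + 1/log 2 3"
proof -
  have "DCG 4 (Transposition.transpose 1 3 \<circ> Transposition.transpose 2 4) e34 = 1 + 1/log 2 3"
    unfolding DCG_def sum4 by (simp add: e34_def)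
  then show ?thesis unfolding Zmax_def using finp rho0 by (metis (no_types, lifting) Max_ge finite_imageI image_eqI)
qed

lemma ndcg_ne: "(NDCG 4 id z0 - NDCG 4 tau z0) + (NDCG 4 id e34 - NDCG 4 tau e34) \<noteq> (NDCG 4 id e4 - NDCG 4 tau e4) + (NDCG 4 id e3 - NDCG 4 tau e3)"
proof
  assume h: "(NDCG 4 id z0 - NDCG 4 tau z0) + (NDCG 4 id e34 - NDCG 4 tau e34) = (NDCG 4 id e4 - NDCG 4 tau e4) + (NDCG 4 id e3 - NDCG 4 tau e3)"
  define D where "D = 1/2 - 1/log 2 (3::real)"
  have D: "D < 0" unfolding D_def using l3 by (simp add: field_simps)
  define Z3 where "Z3 = Zmax 4 e3"
  define Z34 where "Z34 = Zmax 4 e34"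
  have z3: "1/2 \<le> Z3" "Z3 \<le> 1" using z3_le z3_ge Z3_def by auto
  have p3: "0 < 1/log 2 (3::real)" using l3 by simp
  have z34: "Z34 > 1" using z34_ge p3 Z34_def by linarith
  have "NDCG 4 id z0 - NDCG 4 tau z0 = 0" by (simp add: NDCG_def d6)
  moreover have "NDCG 4 id e4 - NDCG 4 tau e4 = 0" by (simp add: NDCG_def d5)
  moreover have "NDCG 4 id e3 - NDCG 4 tau e3 = D / Z3"
    using z3 unfolding NDCG_def Z3_def[symmetric] d1 d2 D_def by (simp add: field_simps)
  moreover have "NDCG 4 id e34 - NDCG 4 tau e34 = D / Z34"
    using z34 unfolding NDCG_def Z34_def[symmetric] d3 d4 D_def by (simp add: field_simps)
  ultimately have "D / Z34 = D / Z3" using h by simp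
  then have "Z34 = Z3" using D z3 z34 by (simp add: field_simps)
  then show False using z3 z34 by simp
qed

theorem lemma4:
  shows "(\<exists>m. \<not> globally_observable m NDCG) \<and>
         (\<exists>m. \<not> globally_observable m MAP) \<and>
         (\<exists>m. \<not> globally_observable m AUC)"
proof -
  have 1: "\<not> globally_observable 4 NDCG" by (rule notobs[of id 4 tau z0 e34 e4 e3 NDCG]) (rule prms rels quad ndcg_ne)+
  have 2: "\<not> globally_observable 4 MAP" by (rule notobs[of id 4 tau z0 e34 e4 e3 MAP]) (rule prms rels quad map_ne)+
  have 3: "\<not> globally_observable 4 AUC" by (rule notobs[of id 4 tau z0 e34 e4 e3 AUC]) (rule prms rels quad auc_ne)+
  show ?thesis using 1 2 3 by blast
qed

end
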